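(* Let $(\mathcal C,\otimes,\mathbb I)$ be a monoidal category with pushouts and $(H,\Delta,\varepsilon)$ a coalgebra in $\mathcal C$ such that $V\otimes\varepsilon:V\otimes H\to V$ is an epimorphism for every object $V$ of $\mathcal C$. For each $V$, let $T(V)=(V,V,V\otimes\varepsilon,\mathrm{id}_V)$ be the trivial geometric partial comodule. Then $T(V)$ is globalizable for every $V$, with globalization the free comodule $(V\otimes H,V\otimes\Delta)$ (with $p=V\otimes\varepsilon$); thus $T$ defines a functor $\mathcal C\to\mathsf{PCom}^H_{gl}$. Moreover, with $U:\mathsf{PCom}^H_{gl}\to\mathcal C$ the forgetful functor, $\mathcal J:\mathsf{Com}^H\to\mathsf{PCom}^H_{gl}$ the embedding and $\mathcal G:\mathsf{PCom}^H_{gl}\to\mathsf{Com}^H$ its right adjoint (globalization), the composite $U\circ\mathcal J$ equals the forgetful functor $\mathsf{Com}^H\to\mathcal C$ and $\mathcal G\circ T$ is naturally isomorphic to the free comodule functor $-\otimes H:\mathcal C\to\mathsf{Com}^H$. That is, the free–forgetful adjunction between $\mathcal C$ and $\mathsf{Com}^H$ factors through $\mathsf{PCom}^H_{gl}$ via the adjunctions $U\dashv T$ and $\mathcal J\dashv\mathcal G$.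
   Context: $\mathcal C$ is treated as strict monoidal; the identity of an object $X$ is also written $X$. $\mathsf{Com}^H$ is the category of right $H$-comodules $(Y,\delta)$. A partial comodule datum is $(X,X\bullet H,\pi_X,\rho_X)$ with $\rho_X:X\to X\bullet H$ and $\pi_X:X\otimes H\to X\bullet H$ an epimorphism. For such a datum let: $(X\bullet H)\bullet H$ be the pushout of $\pi_X$ and $\rho_X\otimes H$, with coprojections $\rho_X\bullet H$ and $\pi_{X\bullet H}$; $X\bullet(H\otimes H)$ the pushout of $\pi_X$ and $X\otimes\Delta$, with coprojections $X\bullet\Delta$ and $\pi_{X,\Delta}:X\otimes H\otimes H\to X\bullet(H\otimes H)$; $X\bullet(H\bullet H)$ the pushout of $\pi_{X,\Delta}$ and $\pi_X\otimes H$, with coprojections $\pi'_X$ and $\pi'_{X,\Delta}$. A geometric partial $H$-comodule is a datum such that (GP1) there is $X\bullet\varepsilon:X\bullet H\to X$ with $(X\bullet\varepsilon)\circ\rho_X=\mathrm{id}_X$ and $(X\bullet\varepsilon)\circ\pi_X=X\otimes\varepsilon$; (GP2) there is an isomorphism $\theta:X\bullet(H\bullet H)\to(X\bullet H)\bullet H$ with $\theta\circ\pi'_{X,\Delta}=\pi_{X\bullet H}$ and $(\rho_X\bullet H)\circ\rho_X=\theta\circ\pi'_X\circ(X\bullet\Delta)\circ\rho_X$. Morphisms $X\to X'$ are pairs $(f,f\bullet H)$ with $\rho_{X'}\circ f=(f\bullet H)\circ\rho_X$ and $\pi_{X'}\circ(f\otimes H)=(f\bullet H)\circ\pi_X$;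 category $\mathsf{PCom}^H$. A global comodule $(Y,\delta)$ gives $\mathcal I(Y)=(Y,Y\otimes H,\mathrm{id},\delta)$; a morphism $\mathcal I(Y)\to X$ is a $g:Y\to X$ in $\mathcal C$ with $\pi_X\circ(g\otimes H)\circ\delta=\rho_X\circ g$. A globalization of $X$ is a global comodule $(Y,\delta)$ with $p:Y\to X$ in $\mathcal C$ such that (GL1) $p$ is a morphism $\mathcal I(Y)\to X$; (GL2) $X\bullet H$ with $\rho_X,\pi_X$ is a pushout of $p$ and $(p\otimes H)\circ\delta$; (GL3) for every global $(Z,\delta')$ and morphism $q:\mathcal I(Z)\to X$ there is a unique comodule morphism $\eta:Z\to Y$ with $p\circ\eta=q$. $\mathsf{PCom}^H_{gl}$ is the full subcategory of globalizable geometric partial comodules; $\mathcal I$ corestricts to a fully faithful $\mathcal J:\mathsf{Com}^H\to\mathsf{PCom}^H_{gl}$, which has a right adjoint $\mathcal G$ sending $X$ to its globalization (the equalizer in $\mathsf{Com}^H$ of $\rho_X\otimes H$ and $(\pi_X\otimes H)\circ(X\otimes\Delta)$). Under the hypothesis on $\varepsilon$, $T(V)=(V,V\bullet H=V,\pi_V=V\otimes\varepsilon,\rho_V=\mathrm{id}_V)$ is a geometric partial comodule and $T$ is right adjoint to the forgetful functor $\mathsf{PCom}^H\to\mathcal C$ (known facts). *)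

theory Defs
  imports Main
begin

section \<open>Strict monoidal categories (objects are identified with their identity arrows)\<close>

record 'm moncat =
  Arr  :: "'m \<Rightarrow> bool"
  Dom  :: "'m \<Rightarrow> 'm"
  Cod  :: "'m \<Rightarrow> 'm"
  Comp :: "'m \<Rightarrow> 'm \<Rightarrow> 'm"
  Tens :: "'m \<Rightarrow> 'm \<Rightarrow> 'm"
  Unit :: "'m"

context
  fixes C :: "'m moncat"
begin


definition ide :: "'m \<Rightarrow> bool" where
  "ide a \<longleftrightarrow> Arr C a \<and> Dom C a = a \<and> Cod C a = a"

definition hom :: "'m \<Rightarrow> 'm \<Rightarrow> 'm \<Rightarrow> bool" where
  "hom f X Y \<longleftrightarrow> Arr C f \<and> Dom C f = X \<and> Cod C f = Y"

definition category :: bool where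
  "category \<longleftrightarrow>
     (\<forall>f. Arr C f \<longrightarrow> ide (Dom C f) \<and> ide (Cod C f)) \<and>
     (\<forall>f g. Arr C f \<and> Arr C g \<and> Dom C g = Cod C f \<longrightarrow>
        Arr C (Comp C g f) \<and> Dom C (Comp C g f) = Dom C f \<and> Cod C (Comp C g f) = Cod C g) \<and>
     (\<forall>f. Arr C f \<longrightarrow> Comp C (Cod C f) f = f \<and> Comp C f (Dom C f) = f) \<and>
     (\<forall>f g h. Arr C f \<and> Arr C g \<and> Arr C h \<and> Dom C g = Cod C f \<and> Dom C h = Cod C g \<longrightarrow>
        Comp C (Comp C h g) f = Comp C h (Comp C g f))"

definition strict_monoidal :: bool where
  "strict_monoidal \<longleftrightarrow> category \<and> ide (Unit C) \<and>
     (\<forall>f g. Arr C f \<and> Arr C g \<longrightarrow> Arr C (Tens C f g) \<and>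
        Dom C (Tens C f g) = Tens C (Dom C f) (Dom C g) \<and>
        Cod C (Tens C f g) = Tens C (Cod C f) (Cod C g)) \<and>
     (\<forall>f g f' g'. Arr C f \<and> Arr C g \<and> Dom C g = Cod C f \<and>
                  Arr C f' \<and> Arr C g' \<and> Dom C g' = Cod C f' \<longrightarrow>
        Tens C (Comp C g f) (Comp C g' f') = Comp C (Tens C g g') (Tens C f f')) \<and>
     (\<forall>f g h. Arr C f \<and> Arr C g \<and> Arr C h \<longrightarrow>
        Tens C (Tens C f g) h = Tens C f (Tens C g h)) \<and>
     (\<forall>f. Arr C f \<longrightarrow> Tens C (Unit C) f = f \<and> Tens C f (Unit C) = f)"

definition epi :: "'m \<Rightarrow> bool" where
  "epi e \<longleftrightarrow> Arr C e \<and>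
     (\<forall>g h. Arr C g \<and> Arr C h \<and> Dom C g = Cod C e \<and> Dom C h = Cod C e \<and>
            Comp C g e = Comp C h e \<longrightarrow> g = h)"

definition iso :: "'m \<Rightarrow> bool" where
  "iso f \<longleftrightarrow> Arr C f \<and>
     (\<exists>g. hom g (Cod C f) (Dom C f) \<and> Comp C g f = Dom C f \<and> Comp C f g = Cod C f)"

definition is_pushout :: "'m \<Rightarrow> 'm \<Rightarrow> 'm \<Rightarrow> 'm \<Rightarrow> bool" where
  "is_pushout f g i1 i2 \<longleftrightarrow>
     Arr C f \<and> Arr C g \<and> Dom C f = Dom C g \<and>
     hom i1 (Cod C f) (Cod C i1) \<and> hom i2 (Cod C g) (Cod C i1) \<and>
     Comp C i1 f = Comp C i2 g \<and>
     (\<forall>a b. Arr C a \<and> Arr C b \<and> Dom C a = Cod C f \<and> Dom C b = Cod C g \<and>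
            Cod C a = Cod C b \<and> Comp C a f = Comp C b g \<longrightarrow>
        (\<exists>!u. hom u (Cod C i1) (Cod C a) \<and> Comp C u i1 = a \<and> Comp C u i2 = b))"

definition has_pushouts :: bool where
  "has_pushouts \<longleftrightarrow>
     (\<forall>f g. Arr C f \<and> Arr C g \<and> Dom C f = Dom C g \<longrightarrow> (\<exists>i1 i2. is_pushout f g i1 i2))"

definition po :: "'m \<Rightarrow> 'm \<Rightarrow> 'm \<times> 'm" where
  "po f g = (SOME p. is_pushout f g (fst p) (snd p))"

end

definition coalgebra :: "'m moncat \<Rightarrow> 'm \<Rightarrow> 'm \<Rightarrow> 'm \<Rightarrow> bool" where
  "coalgebra C H \<Delta> \<epsilon> \<longleftrightarrow> ide C H \<and> hom C \<Delta> H (Tens C H H) \<and> hom C \<epsilon> H (Unit C) \<and>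
     Comp C (Tens C \<Delta> H) \<Delta> = Comp C (Tens C H \<Delta>) \<Delta> \<and>
     Comp C (Tens C \<epsilon> H) \<Delta> = H \<and> Comp C (Tens C H \<epsilon>) \<Delta> = H"

definition is_comodule :: "'m moncat \<Rightarrow> 'm \<Rightarrow> 'm \<Rightarrow> 'm \<Rightarrow> 'm \<Rightarrow> 'm \<Rightarrow> bool" where
  "is_comodule C H \<Delta> \<epsilon> Y \<delta> \<longleftrightarrow> ide C Y \<and> hom C \<delta> Y (Tens C Y H) \<and>
     Comp C (Tens C \<delta> H) \<delta> = Comp C (Tens C Y \<Delta>) \<delta> \<and>
     Comp C (Tens C Y \<epsilon>) \<delta> = Y"

definition comod_hom :: "'m moncat \<Rightarrow> 'm \<Rightarrow> 'm \<Rightarrow> 'm \<Rightarrow> 'm \<Rightarrow> 'm \<Rightarrow> 'm \<Rightarrow> bool" where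
  "comod_hom C H Y \<delta> Y' \<delta>' f \<longleftrightarrow> hom C f Y Y' \<and> Comp C \<delta>' f = Comp C (Tens C f H) \<delta>"

definition comod_iso :: "'m moncat \<Rightarrow> 'm \<Rightarrow> 'm \<Rightarrow> 'm \<Rightarrow> 'm \<Rightarrow> 'm \<Rightarrow> 'm \<Rightarrow> bool" where
  "comod_iso C H Y \<delta> Y' \<delta>' f \<longleftrightarrow> comod_hom C H Y \<delta> Y' \<delta>' f \<and> iso C f"

record 'm pdatum =
  Obj  :: 'm
  ObjH :: 'm
  piX  :: 'm
  rhoX :: 'm

definition pc_datum :: "'m moncat \<Rightarrow> 'm \<Rightarrow> 'm pdatum \<Rightarrow> bool" where
  "pc_datum C H X \<longleftrightarrow> ide C (Obj X) \<and> ide C (ObjH X) \<and>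
     hom C (piX X) (Tens C (Obj X) H) (ObjH X) \<and> epi C (piX X) \<and>
     hom C (rhoX X) (Obj X) (ObjH X)"

definition geometric :: "'m moncat \<Rightarrow> 'm \<Rightarrow> 'm \<Rightarrow> 'm \<Rightarrow> 'm pdatum \<Rightarrow> bool" where
  "geometric C H \<Delta> \<epsilon> X \<longleftrightarrow> pc_datum C H X \<and>
     \<comment> \<open>GP1\<close>
     (\<exists>e. hom C e (ObjH X) (Obj X) \<and> Comp C e (rhoX X) = Obj X \<and>
          Comp C e (piX X) = Tens C (Obj X) \<epsilon>) \<and>
     \<comment> \<open>GP2\<close>
     (let rhoXH = fst (po C (piX X) (Tens C (rhoX X) H));          \<comment> \<open>\<rho>_X \<bullet> H\<close>
          piXH  = snd (po C (piX X) (Tens C (rhoX X) H));          \<comment> \<open>\<pi>_{X\<bullet>H}\<close>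
          XDel  = fst (po C (piX X) (Tens C (Obj X) \<Delta>));          \<comment> \<open>X \<bullet> \<Delta>\<close>
          piXD  = snd (po C (piX X) (Tens C (Obj X) \<Delta>));          \<comment> \<open>\<pi>_{X,\<Delta>}\<close>
          piX'  = fst (po C piXD (Tens C (piX X) H));              \<comment> \<open>\<pi>'_X\<close>
          piXD' = snd (po C piXD (Tens C (piX X) H))               \<comment> \<open>\<pi>'_{X,\<Delta>}\<close>
      in \<exists>\<theta>. iso C \<theta> \<and> hom C \<theta> (Cod C piX') (Cod C rhoXH) \<and>
             Comp C \<theta> piXD' = piXH \<and>
             Comp C rhoXH (rhoX X) = Comp C \<theta> (Comp C piX' (Comp C XDel (rhoX X))))"

definition pcom_hom :: "'m moncat \<Rightarrow> 'm \<Rightarrow> 'm pdatum \<Rightarrow> 'm pdatum \<Rightarrow> 'm \<Rightarrow> 'm \<Rightarrow> bool" where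
  "pcom_hom C H X X' f fH \<longleftrightarrow> hom C f (Obj X) (Obj X') \<and> hom C fH (ObjH X) (ObjH X') \<and>
     Comp C (rhoX X') f = Comp C fH (rhoX X) \<and>
     Comp C (piX X') (Tens C f H) = Comp C fH (piX X)"

text \<open>A morphism I(Y) \<rightarrow> X for a global comodule (Y, \<delta>).\<close>
definition incl_hom :: "'m moncat \<Rightarrow> 'm \<Rightarrow> 'm \<Rightarrow> 'm \<Rightarrow> 'm pdatum \<Rightarrow> 'm \<Rightarrow> bool" where
  "incl_hom C H Y \<delta> X g \<longleftrightarrow> hom C g Y (Obj X) \<and>
     Comp C (piX X) (Comp C (Tens C g H) \<delta>) = Comp C (rhoX X) g"

definition is_globalization ::
  "'m moncat \<Rightarrow> 'm \<Rightarrow> 'm \<Rightarrow> 'm \<Rightarrow> 'm pdatum \<Rightarrow> 'm \<Rightarrow> 'm \<Rightarrow> 'm \<Rightarrow> bool" where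
  "is_globalization C H \<Delta> \<epsilon> X Y \<delta> p \<longleftrightarrow> is_comodule C H \<Delta> \<epsilon> Y \<delta> \<and>
     \<comment> \<open>GL1\<close> incl_hom C H Y \<delta> X p \<and>
     \<comment> \<open>GL2\<close> is_pushout C p (Comp C (Tens C p H) \<delta>) (rhoX X) (piX X) \<and>
     \<comment> \<open>GL3\<close>
     (\<forall>Z \<delta>' q. is_comodule C H \<Delta> \<epsilon> Z \<delta>' \<and> incl_hom C H Z \<delta>' X q \<longrightarrow>
        (\<exists>!\<eta>. comod_hom C H Z \<delta>' Y \<delta> \<eta> \<and> Comp C p \<eta> = q))"

definition globalizable :: "'m moncat \<Rightarrow> 'm \<Rightarrow> 'm \<Rightarrow> 'm \<Rightarrow> 'm pdatum \<Rightarrow> bool" where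
  "globalizable C H \<Delta> \<epsilon> X \<longleftrightarrow> geometric C H \<Delta> \<epsilon> X \<and>
     (\<exists>Y \<delta> p. is_globalization C H \<Delta> \<epsilon> X Y \<delta> p)"

definition T :: "'m moncat \<Rightarrow> 'm \<Rightarrow> 'm \<Rightarrow> 'm pdatum" where
  "T C \<epsilon> V = \<lparr>Obj = V, ObjH = V, piX = Tens C V \<epsilon>, rhoX = V\<rparr>"

definition J :: "'m moncat \<Rightarrow> 'm \<Rightarrow> 'm \<Rightarrow> 'm \<Rightarrow> 'm pdatum" where
  "J C H Y \<delta> = \<lparr>Obj = Y, ObjH = Tens C Y H, piX = Tens C Y H, rhoX = \<delta>\<rparr>"

end

theory Submission
  imports Defs
begin

locale smc =
  fixes C :: "'m moncat" and H \<Delta> \<epsilon> :: 'm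
  assumes SM: "strict_monoidal C" and CO: "coalgebra C H \<Delta> \<epsilon>"
begin

lemma cat: "category C" using SM unfolding strict_monoidal_def by blast

lemma arr_comp[simp]: "Arr C f \<Longrightarrow> Arr C g \<Longrightarrow> Dom C g = Cod C f \<Longrightarrow> Arr C (Comp C g f)"
  using cat unfolding category_def by blast
lemma dom_comp[simp]: "Arr C f \<Longrightarrow> Arr C g \<Longrightarrow> Dom C g = Cod C f \<Longrightarrow> Dom C (Comp C g f) = Dom C f"
  using cat unfolding category_def by blast
lemma cod_comp[simp]: "Arr C f \<Longrightarrow> Arr C g \<Longrightarrow> Dom C g = Cod C f \<Longrightarrow> Cod C (Comp C g f) = Cod C g"
  using cat unfolding category_def by blast
lemma comp_assoc: "Arr C f \<Longrightarrow> Arr C g \<Longrightarrow> Arr C h \<Longrightarrow> Dom C g = Cod C f \<Longrightarrow> Dom C h = Cod C g \<Longrightarrow>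
   Comp C (Comp C h g) f = Comp C h (Comp C g f)"
  using cat unfolding category_def by blast
lemma comp_cod_arr[simp]: "Arr C f \<Longrightarrow> Comp C (Cod C f) f = f"
  using cat unfolding category_def by blast
lemma comp_arr_dom[simp]: "Arr C f \<Longrightarrow> Comp C f (Dom C f) = f"
  using cat unfolding category_def by blast
lemma ide_dom: "Arr C f \<Longrightarrow> ide C (Dom C f)"
  using cat unfolding category_def by blast
lemma ide_cod: "Arr C f \<Longrightarrow> ide C (Cod C f)"
  using cat unfolding category_def by blast
lemma ide_simps[simp]: "ide C a \<Longrightarrow> Arr C a" "ide C a \<Longrightarrow> Dom C a = a" "ide C a \<Longrightarrow> Cod C a = a"
  unfolding ide_def by auto
lemma dom_simps[simp]: "Arr C f \<Longrightarrow> Arr C (Dom C f)" "Arr C f \<Longrightarrow> Dom C (Dom C f) = Dom C f"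
  "Arr C f \<Longrightarrow> Cod C (Dom C f) = Dom C f"
  "Arr C f \<Longrightarrow> Arr C (Cod C f)" "Arr C f \<Longrightarrow> Dom C (Cod C f) = Cod C f"
  "Arr C f \<Longrightarrow> Cod C (Cod C f) = Cod C f"
  using ide_dom ide_cod unfolding ide_def by auto
lemma comp_ide_left[simp]: "ide C a \<Longrightarrow> Arr C f \<Longrightarrow> Cod C f = a \<Longrightarrow> Comp C a f = f"
  by (metis comp_cod_arr)
lemma comp_ide_right[simp]: "ide C a \<Longrightarrow> Arr C f \<Longrightarrow> Dom C f = a \<Longrightarrow> Comp C f a = f"
  by (metis comp_arr_dom)

lemma arr_tens[simp]: "Arr C f \<Longrightarrow> Arr C g \<Longrightarrow> Arr C (Tens C f g)"
  using SM unfolding strict_monoidal_def by blast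
lemma dom_tens[simp]: "Arr C f \<Longrightarrow> Arr C g \<Longrightarrow> Dom C (Tens C f g) = Tens C (Dom C f) (Dom C g)"
  using SM unfolding strict_monoidal_def by blast
lemma cod_tens[simp]: "Arr C f \<Longrightarrow> Arr C g \<Longrightarrow> Cod C (Tens C f g) = Tens C (Cod C f) (Cod C g)"
  using SM unfolding strict_monoidal_def by blast
lemma tens_assoc[simp]: "Arr C f \<Longrightarrow> Arr C g \<Longrightarrow> Arr C h \<Longrightarrow> Tens C (Tens C f g) h = Tens C f (Tens C g h)"
  using SM unfolding strict_monoidal_def by blast
lemma ide_Unit[simp]: "ide C (Unit C)"
  using SM unfolding strict_monoidal_def by blast
lemma tens_unit[simp]: "Arr C f \<Longrightarrow> Tens C (Unit C) f = f" "Arr C f \<Longrightarrow> Tens C f (Unit C) = f"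
  using SM unfolding strict_monoidal_def by blast+
lemma interchange: "Arr C f \<Longrightarrow> Arr C g \<Longrightarrow> Dom C g = Cod C f \<Longrightarrow>
   Arr C f' \<Longrightarrow> Arr C g' \<Longrightarrow> Dom C g' = Cod C f' \<Longrightarrow>
   Tens C (Comp C g f) (Comp C g' f') = Comp C (Tens C g g') (Tens C f f')"
  using SM unfolding strict_monoidal_def by blast
lemma ide_tens[simp]: "ide C a \<Longrightarrow> ide C b \<Longrightarrow> ide C (Tens C a b)"
  unfolding ide_def by simp

lemma ideH[simp]: "ide C H" using CO unfolding coalgebra_def by blast
lemma Delta[simp]: "Arr C \<Delta>" "Dom C \<Delta> = H" "Cod C \<Delta> = Tens C H H"
  using CO unfolding coalgebra_def hom_def by blast+
lemma eps[simp]: "Arr C \<epsilon>" "Dom C \<epsilon> = H" "Cod C \<epsilon> = Unit C"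
  using CO unfolding coalgebra_def hom_def by blast+
lemma coassoc: "Comp C (Tens C \<Delta> H) \<Delta> = Comp C (Tens C H \<Delta>) \<Delta>"
  using CO unfolding coalgebra_def by blast
lemma counitL: "Comp C (Tens C \<epsilon> H) \<Delta> = H"
  using CO unfolding coalgebra_def by blast
lemma counitR: "Comp C (Tens C H \<epsilon>) \<Delta> = H"
  using CO unfolding coalgebra_def by blast

lemma tens_comp_ideL: "ide C V \<Longrightarrow> Arr C f \<Longrightarrow> Arr C g \<Longrightarrow> Dom C g = Cod C f \<Longrightarrow>
  Tens C V (Comp C g f) = Comp C (Tens C V g) (Tens C V f)"
  using interchange[of V V f g] by simp
lemma tens_comp_ideR: "ide C V \<Longrightarrow> Arr C f \<Longrightarrow> Arr C g \<Longrightarrow> Dom C g = Cod C f \<Longrightarrow>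
  Tens C (Comp C g f) V = Comp C (Tens C g V) (Tens C f V)"
  using interchange[of f g V V] by simp

lemma po_ext:
  assumes P: "is_pushout C f g i1 i2" and u: "hom C u (Cod C i1) Z" and v: "hom C v (Cod C i1) Z"
    and 1: "Comp C u i1 = Comp C v i1" and 2: "Comp C u i2 = Comp C v i2"
  shows "u = v"
proof -
  have i: "hom C i1 (Cod C f) (Cod C i1)" "hom C i2 (Cod C g) (Cod C i1)" "Comp C i1 f = Comp C i2 g"
    "Arr C f" "Arr C g" "Dom C f = Dom C g"
    using P unfolding is_pushout_def by blast+
  have "Comp C (Comp C u i1) f = Comp C (Comp C u i2) g"
    using i u by (simp add: hom_def comp_assoc)
  hence "\<exists>!w. hom C w (Cod C i1) (Cod C (Comp C u i1)) \<and> Comp C w i1 = Comp C u i1 \<and> Comp C w i2 = Comp C u i2"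
  proof -
    have U: "\<forall>a b. Arr C a \<and> Arr C b \<and> Dom C a = Cod C f \<and> Dom C b = Cod C g \<and>
            Cod C a = Cod C b \<and> Comp C a f = Comp C b g \<longrightarrow>
        (\<exists>!u. hom C u (Cod C i1) (Cod C a) \<and> Comp C u i1 = a \<and> Comp C u i2 = b)"
      using P unfolding is_pushout_def by blast
    have "Arr C (Comp C u i1) \<and> Arr C (Comp C u i2) \<and> Dom C (Comp C u i1) = Cod C f \<and> Dom C (Comp C u i2) = Cod C g \<and>
            Cod C (Comp C u i1) = Cod C (Comp C u i2)"
      using i u by (simp add: hom_def)
    with U \<open>Comp C (Comp C u i1) f = Comp C (Comp C u i2) g\<close> show ?thesis by blast
  qed
  moreover have "Cod C (Comp C u i1) = Z" using u i by (simp add: hom_def)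
  ultimately show ?thesis using u v 1 2 by metis
qed

lemma po_univ:
  assumes P: "is_pushout C f g i1 i2" and "Arr C a" "Arr C b" "Dom C a = Cod C f" "Dom C b = Cod C g"
    "Cod C a = Cod C b" "Comp C a f = Comp C b g"
  obtains u where "hom C u (Cod C i1) (Cod C a)" "Comp C u i1 = a" "Comp C u i2 = b"
  using assms unfolding is_pushout_def by metis

lemma po_spec: assumes "has_pushouts C" "Arr C f" "Arr C g" "Dom C f = Dom C g"
  shows "is_pushout C f g (fst (po C f g)) (snd (po C f g))"
proof -
  obtain i1 i2 where "is_pushout C f g i1 i2" using assms unfolding has_pushouts_def by blast
  hence "is_pushout C f g (fst (i1,i2)) (snd (i1,i2))" by simp
  thus ?thesis unfolding po_def by (rule someI)
qed

end
context smc begin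

lemma eV: "ide C V \<Longrightarrow> Arr C (Tens C V \<epsilon>) \<and> Dom C (Tens C V \<epsilon>) = Tens C V H \<and> Cod C (Tens C V \<epsilon>) = V"
  by simp

lemma K1: "ide C V \<Longrightarrow> Comp C (Tens C V (Tens C \<epsilon> H)) (Tens C V \<Delta>) = Tens C V H"
  using tens_comp_ideL[of V \<Delta> "Tens C \<epsilon> H"] counitL by simp

lemma GP2_core:
  assumes V: "ide C V"
    and P1: "is_pushout C (Tens C V \<epsilon>) (Tens C V H) r1 p1"
    and P2: "is_pushout C (Tens C V \<epsilon>) (Tens C V \<Delta>) x2 p2"
    and P3: "is_pushout C p2 (Tens C V (Tens C \<epsilon> H)) q3 p3"
  shows "\<exists>\<theta>. iso C \<theta> \<and> hom C \<theta> (Cod C q3) (Cod C r1) \<and> Comp C \<theta> p3 = p1 \<and>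
            Comp C r1 V = Comp C \<theta> (Comp C q3 (Comp C x2 V))"
proof -
  define e where "e = Tens C V \<epsilon>"
  define eH where "eH = Tens C V (Tens C \<epsilon> H)"
  have e: "Arr C e" "Dom C e = Tens C V H" "Cod C e = V" using V by (simp_all add: e_def)
  have eHh: "Arr C eH" "Dom C eH = Tens C V (Tens C H H)" "Cod C eH = Tens C V H" using V by (simp_all add: eH_def)
  have K: "Comp C eH (Tens C V \<Delta>) = Tens C V H" using K1 V eH_def by simp
  have r1: "Arr C r1" "Dom C r1 = V" and p1: "Arr C p1" "Dom C p1 = Tens C V H" "Cod C p1 = Cod C r1"
    and rp1: "Comp C r1 e = p1"
    using P1 V unfolding is_pushout_def hom_def e_def by auto
  have x2: "Arr C x2" "Dom C x2 = V" and p2: "Arr C p2" "Dom C p2 = Tens C V (Tens C H H)" "Cod C p2 = Cod C x2"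
    and xp2: "Comp C x2 e = Comp C p2 (Tens C V \<Delta>)"
    using P2 V unfolding is_pushout_def hom_def e_def by auto
  have q3: "Arr C q3" "Dom C q3 = Cod C x2" and p3: "Arr C p3" "Dom C p3 = Tens C V H" "Cod C p3 = Cod C q3"
    and qp3: "Comp C q3 p2 = Comp C p3 eH"
  proof -
    have "hom C q3 (Cod C p2) (Cod C q3)" "hom C p3 (Cod C eH) (Cod C q3)" "Comp C q3 p2 = Comp C p3 eH"
      using P3 unfolding is_pushout_def eH_def by blast+
    thus "Arr C q3" "Dom C q3 = Cod C x2" "Arr C p3" "Dom C p3 = Tens C V H" "Cod C p3 = Cod C q3"
      "Comp C q3 p2 = Comp C p3 eH" using p2 eHh unfolding hom_def by auto
  qed
  define k where "k = Comp C q3 x2"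
  have k: "Arr C k" "Dom C k = V" "Cod C k = Cod C q3" using q3 x2 by (simp_all add: k_def)
  have K2: "Comp C k e = p3"
  proof -
    have "Comp C k e = Comp C q3 (Comp C x2 e)" using q3 x2 e by (simp add: k_def comp_assoc)
    also have "\<dots> = Comp C (Comp C q3 p2) (Tens C V \<Delta>)" using q3 p2 V by (simp add: xp2 comp_assoc)
    also have "\<dots> = Comp C p3 (Comp C eH (Tens C V \<Delta>))" using p3 eHh V by (simp add: qp3 comp_assoc)
    also have "\<dots> = p3" using K p3 V by (metis comp_arr_dom)
    finally show ?thesis .
  qed
  have "Comp C r1 e = Comp C (Comp C p1 eH) (Tens C V \<Delta>)"
    using p1 eHh V by (simp add: comp_assoc K rp1)
  then obtain m where m: "hom C m (Cod C x2) (Cod C r1)" "Comp C m x2 = r1" "Comp C m p2 = Comp C p1 eH"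
    using po_univ[OF P2[folded e_def], of r1 "Comp C p1 eH"] r1 p1 eHh e V by auto
  obtain \<theta> where th: "hom C \<theta> (Cod C q3) (Cod C r1)" "Comp C \<theta> q3 = m" "Comp C \<theta> p3 = p1"
    using po_univ[OF P3[folded eH_def], of m p1] m p1 p2 eHh unfolding hom_def by auto
  obtain \<psi> where ps: "hom C \<psi> (Cod C r1) (Cod C q3)" "Comp C \<psi> r1 = k" "Comp C \<psi> p1 = p3"
    using po_univ[OF P1[folded e_def], of k p3] k p3 e V K2 r1 by auto
  have tp: "Comp C \<theta> \<psi> = Cod C r1"
  proof (rule po_ext[OF P1])
    show "hom C (Comp C \<theta> \<psi>) (Cod C r1) (Cod C r1)" using th ps unfolding hom_def by simp
    show "hom C (Cod C r1) (Cod C r1) (Cod C r1)" using r1 unfolding hom_def by simp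
    have "Comp C (Comp C \<theta> \<psi>) r1 = Comp C \<theta> k" using th ps r1 unfolding hom_def by (simp add: comp_assoc)
    also have "\<dots> = Comp C (Comp C \<theta> q3) x2" using th q3 x2 unfolding hom_def by (simp add: comp_assoc[symmetric] k_def)
    finally show "Comp C (Comp C \<theta> \<psi>) r1 = Comp C (Cod C r1) r1" using th m r1 by simp
    have "Comp C (Comp C \<theta> \<psi>) p1 = Comp C \<theta> p3" using th ps p1 unfolding hom_def by (simp add: comp_assoc)
    thus "Comp C (Comp C \<theta> \<psi>) p1 = Comp C (Cod C r1) p1" using th p1 by (metis comp_cod_arr)
  qed
  have pm: "Comp C \<psi> m = q3"
  proof (rule po_ext[OF P2])
    show "hom C (Comp C \<psi> m) (Cod C x2) (Cod C q3)" using m ps unfolding hom_def by simp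
    show "hom C q3 (Cod C x2) (Cod C q3)" using q3 unfolding hom_def by simp
    show "Comp C (Comp C \<psi> m) x2 = Comp C q3 x2" using m ps x2 unfolding hom_def
      by (simp add: comp_assoc k_def)
    have "Comp C (Comp C \<psi> m) p2 = Comp C \<psi> (Comp C m p2)" using m ps p2 unfolding hom_def
      by (simp add: comp_assoc)
    also have "\<dots> = Comp C (Comp C \<psi> p1) eH" using m ps p1 eHh unfolding hom_def
      by (simp add: comp_assoc[symmetric])
    finally show "Comp C (Comp C \<psi> m) p2 = Comp C q3 p2" using ps qp3 by simp
  qed
  have pt: "Comp C \<psi> \<theta> = Cod C q3"
  proof (rule po_ext[OF P3])
    show "hom C (Comp C \<psi> \<theta>) (Cod C q3) (Cod C q3)" using th ps unfolding hom_def by simp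
    show "hom C (Cod C q3) (Cod C q3) (Cod C q3)" using q3 unfolding hom_def by simp
    have "Comp C (Comp C \<psi> \<theta>) q3 = Comp C \<psi> m" using th ps q3 unfolding hom_def by (simp add: comp_assoc)
    thus "Comp C (Comp C \<psi> \<theta>) q3 = Comp C (Cod C q3) q3" using pm q3 by simp
    have "Comp C (Comp C \<psi> \<theta>) p3 = Comp C \<psi> p1" using th ps p3 unfolding hom_def by (simp add: comp_assoc)
    thus "Comp C (Comp C \<psi> \<theta>) p3 = Comp C (Cod C q3) p3" using ps p3 by (metis comp_cod_arr)
  qed
  have "iso C \<theta>" unfolding iso_def using th ps tp pt unfolding hom_def by metis
  moreover have "Comp C r1 V = Comp C \<theta> (Comp C q3 (Comp C x2 V))"
    using th q3 x2 r1 m V unfolding hom_def by (simp add: comp_assoc[symmetric])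
  ultimately show ?thesis using th by blast
qed

end
context smc begin

lemma T_geometric:
  assumes HP: "has_pushouts C" and V: "ide C V" and EP: "epi C (Tens C V \<epsilon>)"
  shows "geometric C H \<Delta> \<epsilon> (T C \<epsilon> V)"
proof -
  define e where "e = Tens C V \<epsilon>"
  have e: "Arr C e" "Dom C e = Tens C V H" "Cod C e = V" using V by (simp_all add: e_def)
  define r1 where "r1 = fst (po C e (Tens C V H))"
  define p1 where "p1 = snd (po C e (Tens C V H))"
  define x2 where "x2 = fst (po C e (Tens C V \<Delta>))"
  define p2 where "p2 = snd (po C e (Tens C V \<Delta>))"
  define q3 where "q3 = fst (po C p2 (Tens C e H))"
  define p3 where "p3 = snd (po C p2 (Tens C e H))"
  have P1: "is_pushout C e (Tens C V H) r1 p1" unfolding r1_def p1_def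
    by (rule po_spec[OF HP]) (use e V in simp_all)
  have P2: "is_pushout C e (Tens C V \<Delta>) x2 p2" unfolding x2_def p2_def
    by (rule po_spec[OF HP]) (use e V in simp_all)
  have p2: "Arr C p2" "Dom C p2 = Tens C V (Tens C H H)"
    using P2 V unfolding is_pushout_def hom_def by auto
  have P3: "is_pushout C p2 (Tens C e H) q3 p3" unfolding q3_def p3_def
    by (rule po_spec[OF HP]) (use e V p2 in \<open>simp_all add: e_def\<close>)
  have eH: "Tens C e H = Tens C V (Tens C \<epsilon> H)" using V by (simp add: e_def)
  obtain \<theta> where th: "iso C \<theta>" "hom C \<theta> (Cod C q3) (Cod C r1)" "Comp C \<theta> p3 = p1"
            "Comp C r1 V = Comp C \<theta> (Comp C q3 (Comp C x2 V))"
    using GP2_core[OF V P1[unfolded e_def] P2[unfolded e_def] P3[unfolded eH]] by (auto simp: e_def)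
  have pc: "pc_datum C H (T C \<epsilon> V)"
    unfolding pc_datum_def T_def using V EP e unfolding e_def hom_def by simp
  have gp1: "\<exists>ea. hom C ea (ObjH (T C \<epsilon> V)) (Obj (T C \<epsilon> V)) \<and> Comp C ea (rhoX (T C \<epsilon> V)) = Obj (T C \<epsilon> V) \<and>
          Comp C ea (piX (T C \<epsilon> V)) = Tens C (Obj (T C \<epsilon> V)) \<epsilon>"
    by (rule exI[of _ V]) (use V in \<open>simp add: T_def hom_def\<close>)
  show ?thesis unfolding geometric_def Let_def
    apply (intro conjI pc gp1)
    apply (simp only: T_def pdatum.simps)
    using th unfolding r1_def p1_def x2_def p2_def q3_def p3_def e_def by blast
qed

lemma free_comod: assumes V: "ide C V" shows "is_comodule C H \<Delta> \<epsilon> (Tens C V H) (Tens C V \<Delta>)"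
proof -
  have 1: "Comp C (Tens C V (Tens C \<Delta> H)) (Tens C V \<Delta>) = Tens C V (Comp C (Tens C \<Delta> H) \<Delta>)"
    using tens_comp_ideL[of V \<Delta> "Tens C \<Delta> H"] V by simp
  have 2: "Comp C (Tens C V (Tens C H \<Delta>)) (Tens C V \<Delta>) = Tens C V (Comp C (Tens C H \<Delta>) \<Delta>)"
    using tens_comp_ideL[of V \<Delta> "Tens C H \<Delta>"] V by simp
  have 3: "Comp C (Tens C V (Tens C H \<epsilon>)) (Tens C V \<Delta>) = Tens C V (Comp C (Tens C H \<epsilon>) \<Delta>)"
    using tens_comp_ideL[of V \<Delta> "Tens C H \<epsilon>"] V by simp
  show ?thesis unfolding is_comodule_def hom_def
    using V 1 2 3 coassoc counitR by simp
qed

lemma comodD: assumes "is_comodule C H \<Delta> \<epsilon> Y d"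
  shows "ide C Y" "Arr C d" "Dom C d = Y" "Cod C d = Tens C Y H"
    "Comp C (Tens C d H) d = Comp C (Tens C Y \<Delta>) d" "Comp C (Tens C Y \<epsilon>) d = Y"
  using assms unfolding is_comodule_def hom_def by auto

lemma eta_comod:
  assumes Z: "is_comodule C H \<Delta> \<epsilon> Z d" and V: "ide C V" and q: "hom C q Z V"
  shows "comod_hom C H Z d (Tens C V H) (Tens C V \<Delta>) (Comp C (Tens C q H) d)"
proof -
  note z = comodD[OF Z]
  have q': "Arr C q" "Dom C q = Z" "Cod C q = V" using q unfolding hom_def by auto
  have "Comp C (Tens C V \<Delta>) (Comp C (Tens C q H) d) = Comp C (Comp C (Tens C V \<Delta>) (Tens C q H)) d"
    using z q' V by (simp add: comp_assoc)
  also have "Comp C (Tens C V \<Delta>) (Tens C q H) = Tens C q \<Delta>"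
    using interchange[of q V H \<Delta>] q' V by simp
  also have "Tens C q \<Delta> = Comp C (Tens C q (Tens C H H)) (Tens C Z \<Delta>)"
    using interchange[of Z q \<Delta> "Tens C H H"] q' z by simp
  also have "Comp C (Comp C (Tens C q (Tens C H H)) (Tens C Z \<Delta>)) d = Comp C (Tens C q (Tens C H H)) (Comp C (Tens C d H) d)"
    using z q' by (simp add: comp_assoc)
  also have "\<dots> = Comp C (Tens C (Comp C (Tens C q H) d) H) d"
    using interchange[of d "Tens C q H" H H] z q' by (simp add: comp_assoc)
  finally show ?thesis unfolding comod_hom_def hom_def using z q' V by simp
qed

lemma comod_hom_comp:
  assumes "is_comodule C H \<Delta> \<epsilon> Y d" "is_comodule C H \<Delta> \<epsilon> Y' d'" "is_comodule C H \<Delta> \<epsilon> Y'' d''"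
    and f: "comod_hom C H Y d Y' d' f" and g: "comod_hom C H Y' d' Y'' d'' g"
  shows "comod_hom C H Y d Y'' d'' (Comp C g f)"
proof -
  note a = comodD[OF assms(1)] and b = comodD[OF assms(2)] and c = comodD[OF assms(3)]
  have f': "Arr C f" "Dom C f = Y" "Cod C f = Y'" "Comp C d' f = Comp C (Tens C f H) d"
    using f unfolding comod_hom_def hom_def by auto
  have g': "Arr C g" "Dom C g = Y'" "Cod C g = Y''" "Comp C d'' g = Comp C (Tens C g H) d'"
    using g unfolding comod_hom_def hom_def by auto
  have "Comp C d'' (Comp C g f) = Comp C (Comp C d'' g) f" using a b c f' g' comp_assoc[of f g d''] by simp
  also have "\<dots> = Comp C (Comp C (Tens C g H) d') f" using g' by simp
  also have "\<dots> = Comp C (Tens C g H) (Comp C d' f)" using a b c f' g' comp_assoc[of f d' "Tens C g H"] by simp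
  also have "\<dots> = Comp C (Tens C g H) (Comp C (Tens C f H) d)" using f' by simp
  also have "\<dots> = Comp C (Comp C (Tens C g H) (Tens C f H)) d" using a b c f' g' comp_assoc[of d "Tens C f H" "Tens C g H"] by simp
  also have "\<dots> = Comp C (Tens C (Comp C g f) H) d" using a b c f' g' tens_comp_ideR[of H f g] by simp
  finally show ?thesis unfolding comod_hom_def hom_def using f' g' by simp
qed

lemma comod_hom_id: "is_comodule C H \<Delta> \<epsilon> Y d \<Longrightarrow> comod_hom C H Y d Y d Y"
  using comodD[of Y d] unfolding comod_hom_def hom_def by simp

lemma eta_unique:
  assumes Z: "is_comodule C H \<Delta> \<epsilon> Z d" and V: "ide C V"
    and h: "comod_hom C H Z d (Tens C V H) (Tens C V \<Delta>) \<eta>"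
  shows "\<eta> = Comp C (Tens C (Comp C (Tens C V \<epsilon>) \<eta>) H) d"
proof -
  note z = comodD[OF Z]
  have h': "Arr C \<eta>" "Dom C \<eta> = Z" "Cod C \<eta> = Tens C V H" "Comp C (Tens C V \<Delta>) \<eta> = Comp C (Tens C \<eta> H) d"
    using h unfolding comod_hom_def hom_def by auto
  have "Comp C (Tens C (Comp C (Tens C V \<epsilon>) \<eta>) H) d = Comp C (Comp C (Tens C (Tens C V \<epsilon>) H) (Tens C \<eta> H)) d"
    using tens_comp_ideR[of H \<eta> "Tens C V \<epsilon>"] h' V by simp
  also have "\<dots> = Comp C (Tens C (Tens C V \<epsilon>) H) (Comp C (Tens C \<eta> H) d)"
    using h' V z by (simp add: comp_assoc)
  also have "\<dots> = Comp C (Comp C (Tens C V (Tens C \<epsilon> H)) (Tens C V \<Delta>)) \<eta>"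
    using h' V z by (simp add: comp_assoc)
  also have "\<dots> = \<eta>" using K1[OF V] h' V by simp
  finally show ?thesis by simp
qed

lemma pushout_triv:
  assumes V: "ide C V"
  shows "is_pushout C (Tens C V \<epsilon>) (Tens C V H) V (Tens C V \<epsilon>)"
  unfolding is_pushout_def hom_def
proof (intro conjI allI impI)
  fix a b assume ab: "Arr C a \<and> Arr C b \<and> Dom C a = Cod C (Tens C V \<epsilon>) \<and> Dom C b = Cod C (Tens C V H) \<and>
            Cod C a = Cod C b \<and> Comp C a (Tens C V \<epsilon>) = Comp C b (Tens C V H)"
  have "Comp C b (Tens C V H) = b" using ab V by simp
  then show "\<exists>!u. (Arr C u \<and> Dom C u = Cod C V \<and> Cod C u = Cod C a) \<and> Comp C u V = a \<and> Comp C u (Tens C V \<epsilon>) = b"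
    using ab V by (intro ex1I[of _ a]) auto
qed (use V in simp_all)

lemma T_glob:
  assumes V: "ide C V"
  shows "is_globalization C H \<Delta> \<epsilon> (T C \<epsilon> V) (Tens C V H) (Tens C V \<Delta>) (Tens C V \<epsilon>)"
proof -
  have g: "Comp C (Tens C (Tens C V \<epsilon>) H) (Tens C V \<Delta>) = Tens C V H" using K1[OF V] V by simp
  have gl1: "incl_hom C H (Tens C V H) (Tens C V \<Delta>) (T C \<epsilon> V) (Tens C V \<epsilon>)"
    unfolding incl_hom_def T_def hom_def using g V by simp
  have gl3: "\<exists>!\<eta>. comod_hom C H Z d' (Tens C V H) (Tens C V \<Delta>) \<eta> \<and> Comp C (Tens C V \<epsilon>) \<eta> = q"
    if Z: "is_comodule C H \<Delta> \<epsilon> Z d'" and q: "incl_hom C H Z d' (T C \<epsilon> V) q" for Z d' q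
  proof -
    have q': "hom C q Z V" "Comp C (Tens C V \<epsilon>) (Comp C (Tens C q H) d') = q"
      using q V unfolding incl_hom_def T_def hom_def by auto
    show ?thesis
    proof (rule ex1I[of _ "Comp C (Tens C q H) d'"])
      show "comod_hom C H Z d' (Tens C V H) (Tens C V \<Delta>) (Comp C (Tens C q H) d') \<and>
            Comp C (Tens C V \<epsilon>) (Comp C (Tens C q H) d') = q"
        using eta_comod[OF Z V q'(1)] q'(2) by simp
      fix \<eta> assume "comod_hom C H Z d' (Tens C V H) (Tens C V \<Delta>) \<eta> \<and> Comp C (Tens C V \<epsilon>) \<eta> = q"
      thus "\<eta> = Comp C (Tens C q H) d'" using eta_unique[OF Z V] by blast
    qed
  qed
  show ?thesis unfolding is_globalization_def
    using free_comod[OF V] gl1 gl3 pushout_triv[OF V] g by (simp add: T_def)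
qed

end
context smc begin

lemma T_mor: assumes f: "Arr C f" shows "pcom_hom C H (T C \<epsilon> (Dom C f)) (T C \<epsilon> (Cod C f)) f f"
proof -
  have 1: "Comp C (Tens C (Cod C f) \<epsilon>) (Tens C f H) = Tens C f \<epsilon>"
    using interchange[of f "Cod C f" H \<epsilon>] f by simp
  have 2: "Comp C f (Tens C (Dom C f) \<epsilon>) = Tens C f \<epsilon>"
    using interchange[of "Dom C f" f \<epsilon> "Unit C"] f by simp
  show ?thesis unfolding pcom_hom_def T_def hom_def using f 1 2 by simp
qed

lemma glD: assumes "is_globalization C H \<Delta> \<epsilon> (T C \<epsilon> V) Y d p" "ide C V"
  shows "is_comodule C H \<Delta> \<epsilon> Y d" "hom C p Y V" "Comp C (Tens C V \<epsilon>) (Comp C (Tens C p H) d) = p"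
    "incl_hom C H Y d (T C \<epsilon> V) p"
    "\<And>Z d' q. is_comodule C H \<Delta> \<epsilon> Z d' \<Longrightarrow> incl_hom C H Z d' (T C \<epsilon> V) q \<Longrightarrow>
        (\<exists>!\<eta>. comod_hom C H Z d' Y d \<eta> \<and> Comp C p \<eta> = q)"
  using assms unfolding is_globalization_def incl_hom_def T_def hom_def by auto

lemma G_iso:
  assumes V: "ide C V" and GL: "is_globalization C H \<Delta> \<epsilon> (T C \<epsilon> V) Y d p"
  shows "comod_iso C H Y d (Tens C V H) (Tens C V \<Delta>) (Comp C (Tens C p H) d)"
proof -
  note g = glD[OF GL V]
  note y = comodD[OF g(1)]
  have p: "Arr C p" "Dom C p = Y" "Cod C p = V" using g(2) unfolding hom_def by auto
  define \<phi> where "\<phi> = Comp C (Tens C p H) d"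
  have ph: "comod_hom C H Y d (Tens C V H) (Tens C V \<Delta>) \<phi>" unfolding \<phi>_def by (rule eta_comod[OF g(1) V g(2)])
  have ph': "Arr C \<phi>" "Dom C \<phi> = Y" "Cod C \<phi> = Tens C V H" using ph unfolding comod_hom_def hom_def by auto
  have ephi: "Comp C (Tens C V \<epsilon>) \<phi> = p" using g(3) \<phi>_def by simp
  have FC: "is_comodule C H \<Delta> \<epsilon> (Tens C V H) (Tens C V \<Delta>)" by (rule free_comod[OF V])
  have gl1: "incl_hom C H (Tens C V H) (Tens C V \<Delta>) (T C \<epsilon> V) (Tens C V \<epsilon>)"
    using glD(4)[OF T_glob[OF V] V] .
  obtain \<psi> where ps: "comod_hom C H (Tens C V H) (Tens C V \<Delta>) Y d \<psi>" "Comp C p \<psi> = Tens C V \<epsilon>"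
    using g(5)[OF FC gl1] by blast
  have ps': "Arr C \<psi>" "Dom C \<psi> = Tens C V H" "Cod C \<psi> = Y" using ps unfolding comod_hom_def hom_def by auto
  have c1: "comod_hom C H (Tens C V H) (Tens C V \<Delta>) (Tens C V H) (Tens C V \<Delta>) (Comp C \<phi> \<psi>)"
    by (rule comod_hom_comp[OF FC g(1) FC ps(1) ph])
  have "Comp C (Tens C V \<epsilon>) (Comp C \<phi> \<psi>) = Comp C (Comp C (Tens C V \<epsilon>) \<phi>) \<psi>"
    using ph' ps' V comp_assoc[of \<psi> \<phi> "Tens C V \<epsilon>"] by simp
  also have "\<dots> = Tens C V \<epsilon>" using ephi ps by simp
  finally have "Comp C \<phi> \<psi> = Comp C (Tens C (Tens C V \<epsilon>) H) (Tens C V \<Delta>)"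
    using eta_unique[OF FC V c1] by simp
  hence pp: "Comp C \<phi> \<psi> = Tens C V H" using K1[OF V] V by simp
  have c2: "comod_hom C H Y d Y d (Comp C \<psi> \<phi>)"
    by (rule comod_hom_comp[OF g(1) FC g(1) ph ps(1)])
  have "Comp C p (Comp C \<psi> \<phi>) = Comp C (Comp C p \<psi>) \<phi>"
    using ph' ps' p comp_assoc[of \<phi> \<psi> p] by simp
  also have "\<dots> = p" using ps ephi by simp
  finally have e2: "Comp C p (Comp C \<psi> \<phi>) = p" .
  have e3: "Comp C p Y = p" using p by (metis comp_arr_dom)
  have "\<exists>!\<eta>. comod_hom C H Y d Y d \<eta> \<and> Comp C p \<eta> = p" using g(5)[OF g(1) g(4)] .
  hence pp2: "Comp C \<psi> \<phi> = Y" using c2 e2 comod_hom_id[OF g(1)] e3 by blast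
  have "iso C \<phi>" unfolding iso_def hom_def using ph' ps' pp pp2 by auto
  thus ?thesis unfolding comod_iso_def using ph \<phi>_def by simp
qed

lemma G_nat:
  assumes f: "Arr C f"
    and GV: "is_globalization C H \<Delta> \<epsilon> (T C \<epsilon> (Dom C f)) Y d p"
    and GW: "is_globalization C H \<Delta> \<epsilon> (T C \<epsilon> (Cod C f)) Y' d' p'"
    and eta: "comod_hom C H Y d Y' d' \<eta>" and com: "Comp C p' \<eta> = Comp C f p"
  shows "Comp C (Comp C (Tens C p' H) d') \<eta> = Comp C (Tens C f H) (Comp C (Tens C p H) d)"
proof -
  note g = glD[OF GV ide_dom[OF f]] and g' = glD[OF GW ide_cod[OF f]]
  note y = comodD[OF g(1)] and y' = comodD[OF g'(1)]
  have p: "Arr C p" "Dom C p = Y" "Cod C p = Dom C f" using g(2) unfolding hom_def by auto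
  have p': "Arr C p'" "Dom C p' = Y'" "Cod C p' = Cod C f" using g'(2) unfolding hom_def by auto
  have e: "Arr C \<eta>" "Dom C \<eta> = Y" "Cod C \<eta> = Y'" "Comp C d' \<eta> = Comp C (Tens C \<eta> H) d"
    using eta unfolding comod_hom_def hom_def by auto
  have "Comp C (Comp C (Tens C p' H) d') \<eta> = Comp C (Tens C p' H) (Comp C d' \<eta>)"
    using comp_assoc[of \<eta> d' "Tens C p' H"] e p' y' by simp
  also have "\<dots> = Comp C (Tens C p' H) (Comp C (Tens C \<eta> H) d)" using e by simp
  also have "\<dots> = Comp C (Comp C (Tens C p' H) (Tens C \<eta> H)) d"
    using comp_assoc[of d "Tens C \<eta> H" "Tens C p' H"] e p' y by simp
  also have "Comp C (Tens C p' H) (Tens C \<eta> H) = Tens C (Comp C p' \<eta>) H"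
    using tens_comp_ideR[of H \<eta> p'] e p' by simp
  also have "\<dots> = Comp C (Tens C f H) (Tens C p H)"
    using com tens_comp_ideR[of H p f] f p by simp
  also have "Comp C (Comp C (Tens C f H) (Tens C p H)) d = Comp C (Tens C f H) (Comp C (Tens C p H) d)"
    using comp_assoc[of d "Tens C p H" "Tens C f H"] f p y by simp
  finally show ?thesis .
qed

end

theorem proposition3p10:
  fixes C :: "'m moncat" and H \<Delta> \<epsilon> :: 'm
  assumes "strict_monoidal C"
    and "has_pushouts C"
    and "coalgebra C H \<Delta> \<epsilon>"
    and "\<forall>V. ide C V \<longrightarrow> epi C (Tens C V \<epsilon>)"
  shows
    \<comment> \<open>T(V) is globalizable, with globalization (V \<otimes> H, V \<otimes> \<Delta>) and p = V \<otimes> \<epsilon>\<close>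
    "(\<forall>V. ide C V \<longrightarrow>
        globalizable C H \<Delta> \<epsilon> (T C \<epsilon> V) \<and>
        is_globalization C H \<Delta> \<epsilon> (T C \<epsilon> V) (Tens C V H) (Tens C V \<Delta>) (Tens C V \<epsilon>)) \<and>
     \<comment> \<open>T on morphisms: f \<mapsto> (f, f) is a morphism T(dom f) \<rightarrow> T(cod f)\<close>
     (\<forall>f. Arr C f \<longrightarrow> pcom_hom C H (T C \<epsilon> (Dom C f)) (T C \<epsilon> (Cod C f)) f f) \<and>
     \<comment> \<open>U \<circ> J is the forgetful functor\<close>
     (\<forall>Y \<delta>. is_comodule C H \<Delta> \<epsilon> Y \<delta> \<longrightarrow> Obj (J C H Y \<delta>) = Y) \<and>
     \<comment> \<open>G \<circ> T is naturally isomorphic to - \<otimes> H, for any choice of globalizations G\<close>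
     (\<forall>GY GD GP. (\<forall>V. ide C V \<longrightarrow> is_globalization C H \<Delta> \<epsilon> (T C \<epsilon> V) (GY V) (GD V) (GP V)) \<longrightarrow>
        (\<exists>\<phi>. (\<forall>V. ide C V \<longrightarrow>
                 comod_iso C H (GY V) (GD V) (Tens C V H) (Tens C V \<Delta>) (\<phi> V)) \<and>
             (\<forall>f \<eta>. Arr C f \<and>
                 comod_hom C H (GY (Dom C f)) (GD (Dom C f)) (GY (Cod C f)) (GD (Cod C f)) \<eta> \<and>
                 Comp C (GP (Cod C f)) \<eta> = Comp C f (GP (Dom C f)) \<longrightarrow>
               Comp C (\<phi> (Cod C f)) \<eta> = Comp C (Tens C f H) (\<phi> (Dom C f)))))"
proof -
  interpret smc C H \<Delta> \<epsilon> using assms(1,3) by unfold_locales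
  have A: "\<forall>V. ide C V \<longrightarrow>
        globalizable C H \<Delta> \<epsilon> (T C \<epsilon> V) \<and>
        is_globalization C H \<Delta> \<epsilon> (T C \<epsilon> V) (Tens C V H) (Tens C V \<Delta>) (Tens C V \<epsilon>)"
    using T_geometric[OF assms(2)] T_glob assms(4) unfolding globalizable_def by blast
  have B: "\<forall>f. Arr C f \<longrightarrow> pcom_hom C H (T C \<epsilon> (Dom C f)) (T C \<epsilon> (Cod C f)) f f"
    using T_mor by blast
  have D: "\<forall>GY GD GP. (\<forall>V. ide C V \<longrightarrow> is_globalization C H \<Delta> \<epsilon> (T C \<epsilon> V) (GY V) (GD V) (GP V)) \<longrightarrow>
        (\<exists>\<phi>. (\<forall>V. ide C V \<longrightarrow>
                 comod_iso C H (GY V) (GD V) (Tens C V H) (Tens C V \<Delta>) (\<phi> V)) \<and>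
             (\<forall>f \<eta>. Arr C f \<and>
                 comod_hom C H (GY (Dom C f)) (GD (Dom C f)) (GY (Cod C f)) (GD (Cod C f)) \<eta> \<and>
                 Comp C (GP (Cod C f)) \<eta> = Comp C f (GP (Dom C f)) \<longrightarrow>
               Comp C (\<phi> (Cod C f)) \<eta> = Comp C (Tens C f H) (\<phi> (Dom C f))))"
  proof (intro allI impI)
    fix GY GD GP
    assume G: "\<forall>V. ide C V \<longrightarrow> is_globalization C H \<Delta> \<epsilon> (T C \<epsilon> V) (GY V) (GD V) (GP V)"
    show "\<exists>\<phi>. (\<forall>V. ide C V \<longrightarrow>
                 comod_iso C H (GY V) (GD V) (Tens C V H) (Tens C V \<Delta>) (\<phi> V)) \<and>
             (\<forall>f \<eta>. Arr C f \<and>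
                 comod_hom C H (GY (Dom C f)) (GD (Dom C f)) (GY (Cod C f)) (GD (Cod C f)) \<eta> \<and>
                 Comp C (GP (Cod C f)) \<eta> = Comp C f (GP (Dom C f)) \<longrightarrow>
               Comp C (\<phi> (Cod C f)) \<eta> = Comp C (Tens C f H) (\<phi> (Dom C f)))"
    proof (intro exI[of _ "\<lambda>V. Comp C (Tens C (GP V) H) (GD V)"] conjI allI impI)
      fix V assume "ide C V"
      thus "comod_iso C H (GY V) (GD V) (Tens C V H) (Tens C V \<Delta>) (Comp C (Tens C (GP V) H) (GD V))"
        using G_iso G by blast
    next
      fix f \<eta>
      assume h: "Arr C f \<and>
                 comod_hom C H (GY (Dom C f)) (GD (Dom C f)) (GY (Cod C f)) (GD (Cod C f)) \<eta> \<and>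
                 Comp C (GP (Cod C f)) \<eta> = Comp C f (GP (Dom C f))"
      show "Comp C (Comp C (Tens C (GP (Cod C f)) H) (GD (Cod C f))) \<eta> =
            Comp C (Tens C f H) (Comp C (Tens C (GP (Dom C f)) H) (GD (Dom C f)))"
        using G_nat[of f] h G ide_dom ide_cod by blast
    qed
  qed
  show ?thesis using A B D by (simp add: J_def)
qed

end
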